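(* If $n\ge 1$ and $k\ge 2$ are integers, then the $k$-Pell graph $\Pi_{n,k}$ is a median graph.
   Context: For an integer $k\ge 2$, a $k$-Pell string is a finite word over the alphabet $\{0,1,\ldots,k-1,kk\}$, i.e. a word over $\{0,1,\ldots,k\}$ in which every maximal run of the letter $k$ has even length. For $n\ge 0$, the $k$-Pell graph $\Pi_{n,k}$ has as vertices all $k$-Pell strings of length $n$, and two vertices are adjacent if one is obtained from the other either by replacing a single letter $i$ by $i+1$ (or vice versa) for some $i\in\{0,1,\ldots,k-2\}$, or by replacing one factor $(k-1)(k-1)$ by $kk$ (or vice versa), in such a way that the resulting string is again a $k$-Pell string. A connected graph $G$ is a median graph if every triple $x,y,z$ of vertices has a unique median, i.e. a unique vertex lying simultaneously on a shortest $x,y$-path, a shortest $x,z$-path and a shortest $y,z$-path. *)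

theory Defs
  imports Main
begin

fun walk :: "'a set \<Rightarrow> ('a \<Rightarrow> 'a \<Rightarrow> bool) \<Rightarrow> 'a list \<Rightarrow> bool" where
  "walk V E [] = False"
| "walk V E [x] = (x \<in> V)"
| "walk V E (x # y # xs) = (x \<in> V \<and> E x y \<and> walk V E (y # xs))"

text \<open>A path from x to y of length (number of edges) length p - 1.\<close>
definition path_betw :: "'a set \<Rightarrow> ('a \<Rightarrow> 'a \<Rightarrow> bool) \<Rightarrow> 'a \<Rightarrow> 'a \<Rightarrow> 'a list \<Rightarrow> bool" where
  "path_betw V E x y p \<longleftrightarrow> walk V E p \<and> hd p = x \<and> last p = y \<and> distinct p"

definition connected_graph :: "'a set \<Rightarrow> ('a \<Rightarrow> 'a \<Rightarrow> bool) \<Rightarrow> bool" where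
  "connected_graph V E \<longleftrightarrow> V \<noteq> {} \<and> (\<forall>x\<in>V. \<forall>y\<in>V. \<exists>p. path_betw V E x y p)"

definition shortest_path :: "'a set \<Rightarrow> ('a \<Rightarrow> 'a \<Rightarrow> bool) \<Rightarrow> 'a \<Rightarrow> 'a \<Rightarrow> 'a list \<Rightarrow> bool" where
  "shortest_path V E x y p \<longleftrightarrow> path_betw V E x y p \<and>
     (\<forall>q. path_betw V E x y q \<longrightarrow> length p \<le> length q)"

definition on_shortest_path :: "'a set \<Rightarrow> ('a \<Rightarrow> 'a \<Rightarrow> bool) \<Rightarrow> 'a \<Rightarrow> 'a \<Rightarrow> 'a \<Rightarrow> bool" where
  "on_shortest_path V E x y w \<longleftrightarrow> (\<exists>p. shortest_path V E x y p \<and> w \<in> set p)"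

definition is_median :: "'a set \<Rightarrow> ('a \<Rightarrow> 'a \<Rightarrow> bool) \<Rightarrow> 'a \<Rightarrow> 'a \<Rightarrow> 'a \<Rightarrow> 'a \<Rightarrow> bool" where
  "is_median V E x y z m \<longleftrightarrow> m \<in> V \<and> on_shortest_path V E x y m \<and>
     on_shortest_path V E x z m \<and> on_shortest_path V E y z m"

definition median_graph :: "'a set \<Rightarrow> ('a \<Rightarrow> 'a \<Rightarrow> bool) \<Rightarrow> bool" where
  "median_graph V E \<longleftrightarrow> connected_graph V E \<and>
     (\<forall>x\<in>V. \<forall>y\<in>V. \<forall>z\<in>V. \<exists>!m. is_median V E x y z m)"

text \<open>Words over {0,...,k} parsed uniquely as words over the alphabet {0,...,k-1, kk}:
  equivalently every maximal run of the letter k has even length.\<close>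
fun pell_string :: "nat \<Rightarrow> nat list \<Rightarrow> bool" where
  "pell_string k [] = True"
| "pell_string k (a # w) =
     (if a < k then pell_string k w
      else if a = k then (case w of [] \<Rightarrow> False | b # w' \<Rightarrow> b = k \<and> pell_string k w')
      else False)"

definition pell_vertices :: "nat \<Rightarrow> nat \<Rightarrow> nat list set" where
  "pell_vertices n k = {w. length w = n \<and> pell_string k w}"

definition letter_step :: "nat \<Rightarrow> nat list \<Rightarrow> nat list \<Rightarrow> bool" where
  "letter_step k u v \<longleftrightarrow> (\<exists>p s i. i + 2 \<le> k \<and> u = p @ [i] @ s \<and> v = p @ [i + 1] @ s)"

definition block_step :: "nat \<Rightarrow> nat list \<Rightarrow> nat list \<Rightarrow> bool" where
  "block_step k u v \<longleftrightarrow> (\<exists>p s. u = p @ [k - 1, k - 1] @ s \<and> v = p @ [k, k] @ s)"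

definition pell_adj :: "nat \<Rightarrow> nat \<Rightarrow> nat list \<Rightarrow> nat list \<Rightarrow> bool" where
  "pell_adj n k u v \<longleftrightarrow> u \<in> pell_vertices n k \<and> v \<in> pell_vertices n k \<and>
     (letter_step k u v \<or> letter_step k v u \<or> block_step k u v \<or> block_step k v u)"

end

theory Submission
  imports Defs
begin


inductive pl :: "nat \<Rightarrow> nat list \<Rightarrow> bool" for k where
  pl_nil: "pl k []"
| pl_let: "x < k \<Longrightarrow> pl k w \<Longrightarrow> pl k (x # w)"
| pl_blk: "pl k w \<Longrightarrow> pl k (k # k # w)"

lemma pell_pl: "pell_string k w \<longleftrightarrow> pl k w"
proof
  show "pell_string k w \<Longrightarrow> pl k w"
    by (induction k w rule: pell_string.induct)
       (auto split: if_splits list.splits intro: pl.intros)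
  show "pl k w \<Longrightarrow> pell_string k w"
    by (induction rule: pl.induct) auto
qed

fun blk :: "nat \<Rightarrow> nat list \<Rightarrow> nat list" where
  "blk k [] = []"
| "blk k [x] = [0]"
| "blk k (x # y # w) = (if x = k then 1 # 0 # blk k w else 0 # blk k (y # w))"

lemma blk_cons_nk[simp]: "x \<noteq> k \<Longrightarrow> blk k (x # w) = 0 # blk k w"
  by (cases w) auto

lemma length_blk[simp]: "length (blk k w) = length w"
  by (induction k w rule: blk.induct) auto

definition amap :: "nat \<Rightarrow> nat list \<Rightarrow> nat list" where
  "amap k u = map (\<lambda>x. min x (k - 1)) u"

lemma amap_simps[simp]: "amap k [] = []" "amap k (x # w) = min x (k - 1) # amap k w"
  "amap k (a @ b) = amap k a @ amap k b" "length (amap k u) = length u"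
  by (auto simp: amap_def)

definition dst :: "nat \<Rightarrow> nat \<Rightarrow> nat" where
  "dst a b = (if a \<le> b then b - a else a - b)"

fun l1 :: "nat list \<Rightarrow> nat list \<Rightarrow> nat" where
  "l1 (x # xs) (y # ys) = dst x y + l1 xs ys"
| "l1 _ _ = 0"

lemma l1_same[simp]: "l1 xs xs = 0"
  by (induction xs) (auto simp: dst_def)

lemma l1_sym: "l1 xs ys = l1 ys xs"
  by (induction xs ys rule: l1.induct) (auto simp: dst_def)

lemma l1_append: "length a = length a' \<Longrightarrow> l1 (a @ b) (a' @ b') = l1 a a' + l1 b b'"
  by (induction a a' rule: l1.induct) auto

lemma l1_tri: "length a = length b \<Longrightarrow> length b = length c \<Longrightarrow> l1 a c \<le> l1 a b + l1 b c"
proof (induction a arbitrary: b c)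
  case Nil then show ?case by simp
next
  case (Cons x xs)
  then obtain y ys z zs where "b = y # ys" "c = z # zs"
    by (cases b; cases c) auto
  moreover have "l1 xs zs \<le> l1 xs ys + l1 ys zs" using Cons calculation by simp
  moreover have "dst x z \<le> dst x y + dst y z" unfolding dst_def by (cases "x \<le> y"; cases "y \<le> z"; cases "x \<le> z") auto
  ultimately show ?case by simp
qed

definition D :: "nat \<Rightarrow> nat list \<Rightarrow> nat list \<Rightarrow> nat" where
  "D k u v = l1 (amap k u) (amap k v) + l1 (blk k u) (blk k v)"

lemma D_sym: "D k u v = D k v u"
  by (simp add: D_def l1_sym)

lemma D_same[simp]: "D k u u = 0" by (simp add: D_def)

lemma D_tri: "length u = length v \<Longrightarrow> length v = length w \<Longrightarrow> D k u w \<le> D k u v + D k v w"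
  unfolding D_def using l1_tri[of "amap k u" "amap k v" "amap k w"] l1_tri[of "blk k u" "blk k v" "blk k w"]
  by simp

lemma pl_append: "pl k p \<Longrightarrow> pl k q \<Longrightarrow> pl k (p @ q)"
  by (induction rule: pl.induct) (auto intro: pl.intros)

lemma pl_split: "pl k w \<Longrightarrow> w = p @ i # s \<Longrightarrow> i < k \<Longrightarrow> pl k p \<and> pl k s"
proof (induction arbitrary: p rule: pl.induct)
  case pl_nil then show ?case by simp
next
  case (pl_let x w)
  then show ?case by (cases p) (auto intro: pl.intros)
next
  case (pl_blk w)
  show ?case
  proof (cases p)
    case Nil with pl_blk show ?thesis by auto
  next
    case (Cons a p')
    show ?thesis
    proof (cases p')
      case Nil with pl_blk Cons show ?thesis by auto
    next
      case (Cons b p'')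
      with pl_blk \<open>p = a # p'\<close> show ?thesis by (auto intro: pl.intros)
    qed
  qed
qed

lemma blk_append: "pl k p \<Longrightarrow> blk k (p @ w) = blk k p @ blk k w"
  by (induction rule: pl.induct) auto

definition sstep :: "nat \<Rightarrow> nat list \<Rightarrow> nat list \<Rightarrow> bool" where
  "sstep k u v \<longleftrightarrow> letter_step k u v \<or> letter_step k v u \<or> block_step k u v \<or> block_step k v u"

lemma ls_at: "i + 2 \<le> k \<Longrightarrow> letter_step k (p @ i # s) (p @ (i+1) # s)"
  by (auto simp: letter_step_def)

lemma bs_at: "block_step k (p @ (k-1) # (k-1) # s) (p @ k # k # s)"
  by (auto simp: block_step_def)

lemma letter_step_cons: "letter_step k u v \<Longrightarrow> letter_step k (c # u) (c # v)"
proof -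
  assume "letter_step k u v"
  then obtain p s i where "i + 2 \<le> k" "u = p @ [i] @ s" "v = p @ [i + 1] @ s"
    by (auto simp: letter_step_def)
  then have "c # u = (c # p) @ [i] @ s" "c # v = (c # p) @ [i + 1] @ s" by auto
  with \<open>i + 2 \<le> k\<close> show ?thesis unfolding letter_step_def by blast
qed

lemma block_step_cons: "block_step k u v \<Longrightarrow> block_step k (c # u) (c # v)"
proof -
  assume "block_step k u v"
  then obtain p s where "u = p @ [k-1, k-1] @ s" "v = p @ [k, k] @ s"
    by (auto simp: block_step_def)
  then have "c # u = (c # p) @ [k-1, k-1] @ s" "c # v = (c # p) @ [k, k] @ s" by auto
  then show ?thesis unfolding block_step_def by blast
qed

lemma sstep_cons: "sstep k u v \<Longrightarrow> sstep k (c # u) (c # v)"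
  unfolding sstep_def using letter_step_cons block_step_cons by blast

lemma D_cons_let: "x < k \<Longrightarrow> D k (x # a) (x # b) = D k a b"
  by (simp add: D_def dst_def)

lemma D_cons_blk: "D k (k # k # a) (k # k # b) = D k a b"
  by (simp add: D_def dst_def)

lemma letter_D:
  assumes k: "2 \<le> k" and "pl k u" "letter_step k u v"
  shows "D k u v = 1"
proof -
  obtain p s i where i: "i + 2 \<le> k" and u: "u = p @ [i] @ s" and v: "v = p @ [i + 1] @ s"
    using assms by (auto simp: letter_step_def)
  have "pl k p" "pl k s" using pl_split[OF \<open>pl k u\<close>, of p i s] u i by auto
  have bu: "blk k u = blk k p @ 0 # blk k s" using u i blk_append[OF \<open>pl k p\<close>] by simp
  have bv: "blk k v = blk k p @ 0 # blk k s" using v i blk_append[OF \<open>pl k p\<close>] by simp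
  have "amap k u = amap k p @ i # amap k s" "amap k v = amap k p @ (i+1) # amap k s"
    using u v i by auto
  then show ?thesis unfolding D_def bu bv by (simp add: l1_append dst_def)
qed

lemma block_D:
  assumes k: "2 \<le> k" and "pl k u" "block_step k u v"
  shows "D k u v = 1"
proof -
  obtain p s where u: "u = p @ [k-1, k-1] @ s" and v: "v = p @ [k, k] @ s"
    using assms by (auto simp: block_step_def)
  have "pl k p" "pl k ((k-1) # s)" using pl_split[OF \<open>pl k u\<close>, of p "k-1" "(k-1) # s"] u k by auto
  from \<open>pl k ((k-1) # s)\<close> have "pl k s" by (cases rule: pl.cases) (use k in auto)
  have bu: "blk k u = blk k p @ 0 # 0 # blk k s" using u k blk_append[OF \<open>pl k p\<close>] by simp
  have bv: "blk k v = blk k p @ 1 # 0 # blk k s" using v k blk_append[OF \<open>pl k p\<close>] by simp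
  have "amap k u = amap k p @ (k-1) # (k-1) # amap k s" "amap k v = amap k p @ (k-1) # (k-1) # amap k s"
    using u v k by auto
  then show ?thesis unfolding D_def bu bv by (simp add: l1_append dst_def)
qed

lemma sstep_D:
  assumes k: "2 \<le> k" and "pl k u" "pl k v" "sstep k u v"
  shows "D k u v = 1"
  using assms letter_D[OF k] block_D[OF k] D_sym unfolding sstep_def by metis

lemma pl_km1: "2 \<le> k \<Longrightarrow> pl k w \<Longrightarrow> pl k ((k-1) # w)"
  by (rule pl_let) auto

lemma key:
  assumes k: "2 \<le> k"
  shows "pl k u \<Longrightarrow> pl k v \<Longrightarrow> length u = length v \<Longrightarrow> u \<noteq> v \<Longrightarrow>
    \<exists>u'. pl k u' \<and> length u' = length u \<and> sstep k u u' \<and> D k u' v + 1 = D k u v"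
proof (induction u arbitrary: v rule: pl.induct)
  case pl_nil then show ?case by simp
next
  case (pl_let x u1)
  note prems1 = pl_let.prems
  note IH1 = pl_let.IH
  from \<open>pl k v\<close> show ?case
  proof (cases rule: pl.cases)
    case pl_nil with pl_let show ?thesis by simp
  next
    case (pl_let y v1)
    show ?thesis
    proof (cases "x < y")
      case True
      have "letter_step k (x # u1) ((x+1) # u1)" using ls_at[of x k "[]" u1] True pl_let by simp
      moreover have "pl k ((x+1) # u1)" using True pl_let \<open>pl k u1\<close> by (auto intro: pl.intros)
      moreover have "D k ((x+1) # u1) v + 1 = D k (x # u1) v" using True pl_let \<open>x < k\<close>
        by (simp add: D_def dst_def)
      ultimately show ?thesis by (intro exI[of _ "(x+1) # u1"]) (auto simp: sstep_def)
    next
      case False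
      show ?thesis
      proof (cases "y < x")
        case True
        have "letter_step k ((x-1) # u1) (x # u1)" using ls_at[of "x-1" k "[]" u1] True pl_let.hyps \<open>x < k\<close>
          by simp
        moreover have "pl k ((x-1) # u1)" using True pl_let \<open>pl k u1\<close> \<open>x < k\<close> by (auto intro: pl.intros)
        moreover have "D k ((x-1) # u1) v + 1 = D k (x # u1) v" using True pl_let \<open>x < k\<close>
          by (simp add: D_def dst_def; arith)
        ultimately show ?thesis by (intro exI[of _ "(x-1) # u1"]) (auto simp: sstep_def)
      next
        case False
        with \<open>\<not> x < y\<close> have xy: "x = y" by simp
        with pl_let prems1 have "u1 \<noteq> v1" "length u1 = length v1" by auto
        with IH1[OF \<open>pl k v1\<close>] obtain u1' where
          "pl k u1'" "length u1' = length u1" "sstep k u1 u1'" "D k u1' v1 + 1 = D k u1 v1" by blast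
        then show ?thesis using pl_let xy D_cons_let
          by (intro exI[of _ "x # u1'"]) (auto intro: pl.intros sstep_cons)
      qed
    qed
  next
    case (pl_blk v2)
    show ?thesis
    proof (cases "x + 1 < k")
      case True
      have "letter_step k (x # u1) ((x+1) # u1)" using ls_at[of x k "[]" u1] True by simp
      moreover have "pl k ((x+1) # u1)" using True pl_let by (auto intro: pl.intros)
      moreover have "D k ((x+1) # u1) v + 1 = D k (x # u1) v" using True pl_let pl_blk
        by (simp add: D_def dst_def; arith)
      ultimately show ?thesis by (intro exI[of _ "(x+1) # u1"]) (auto simp: sstep_def)
    next
      case False
      with pl_let have x: "x = k - 1" by simp
      from \<open>pl k u1\<close> show ?thesis
      proof (cases rule: pl.cases)
        case pl_nil with pl_let pl_blk show ?thesis by simp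
      next
        case (pl_let x2 u3)
        show ?thesis
        proof (cases "x2 + 1 < k")
          case True
          have "letter_step k (x # x2 # u3) (x # (x2+1) # u3)" using ls_at[of x2 k "[x]" u3] True by simp
          moreover have "pl k (x # (x2+1) # u3)" using True pl_let \<open>x < k\<close> by (auto intro: pl.intros)
          moreover have "D k (x # (x2+1) # u3) v + 1 = D k (x # x2 # u3) v" using True pl_let pl_blk x assms
            by (simp add: D_def dst_def; arith)
          ultimately show ?thesis using pl_let by (intro exI[of _ "x # (x2+1) # u3"]) (auto simp: sstep_def)
        next
          case False
          with pl_let have x2: "x2 = k - 1" by simp
          have "block_step k (x # x2 # u3) (k # k # u3)" using bs_at[of k "[]" u3] x x2 by simp
          moreover have "pl k (k # k # u3)" using pl_let by (auto intro: pl.intros)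
          moreover have "D k (k # k # u3) v + 1 = D k (x # x2 # u3) v" using pl_let pl_blk x x2 k
            by (simp add: D_def dst_def)
          ultimately show ?thesis using pl_let by (intro exI[of _ "k # k # u3"]) (auto simp: sstep_def)
        qed
      next
        case (pl_blk u4)
        from \<open>length (x # u1) = length v\<close> \<open>v = k # k # v2\<close> \<open>u1 = k # k # u4\<close>
        have "length (blk k v2) > 0" by (cases v2) auto
        then obtain c C where cC: "blk k v2 = c # C" by (cases "blk k v2") auto
        have "block_step k (x # (k-1) # (k-1) # u4) (x # k # k # u4)" using bs_at[of k "[x]" u4] by simp
        moreover have "pl k ((k-1) # (k-1) # (k-1) # u4)" using pl_km1[OF k pl_km1[OF k pl_km1[OF k \<open>pl k u4\<close>]]] .
        moreover have "D k ((k-1) # (k-1) # (k-1) # u4) v + 1 = D k (x # k # k # u4) v"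
          using pl_blk \<open>v = k # k # v2\<close> x k cC
          by (simp add: D_def dst_def)
        ultimately show ?thesis using pl_blk x by (intro exI[of _ "(k-1) # (k-1) # (k-1) # u4"]) (auto simp: sstep_def)
      qed
    qed
  qed
next
  case (pl_blk u2)
  from \<open>pl k v\<close> show ?case
  proof (cases rule: pl.cases)
    case pl_nil with pl_blk show ?thesis by simp
  next
    case (pl_let y v1)
    have "block_step k ((k-1) # (k-1) # u2) (k # k # u2)" using bs_at[of k "[]" u2] by simp
    moreover have "pl k ((k-1) # (k-1) # u2)" using pl_km1[OF k pl_km1[OF k \<open>pl k u2\<close>]] .
    moreover have "D k ((k-1) # (k-1) # u2) v + 1 = D k (k # k # u2) v"
      using pl_let k by (simp add: D_def dst_def)
    ultimately show ?thesis by (intro exI[of _ "(k-1) # (k-1) # u2"]) (auto simp: sstep_def)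
  next
    case (pl_blk v2)
    with pl_blk.prems have "u2 \<noteq> v2" "length u2 = length v2" by auto
    with pl_blk.IH[OF \<open>pl k v2\<close>] obtain u2' where
      "pl k u2'" "length u2' = length u2" "sstep k u2 u2'" "D k u2' v2 + 1 = D k u2 v2" by blast
    then show ?thesis using pl_blk D_cons_blk
      by (intro exI[of _ "k # k # u2'"]) (auto intro: pl.intros sstep_cons)
  qed
qed

lemma mem_V: "u \<in> pell_vertices n k \<longleftrightarrow> length u = n \<and> pl k u"
  by (simp add: pell_vertices_def pell_pl)

lemma adj_iff: "pell_adj n k u v \<longleftrightarrow> u \<in> pell_vertices n k \<and> v \<in> pell_vertices n k \<and> sstep k u v"
  by (simp add: pell_adj_def sstep_def)

lemma walk_append: "walk V E (xs @ y # ys) \<longleftrightarrow> walk V E (xs @ [y]) \<and> walk V E (y # ys)"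
proof (induction xs)
  case Nil then show ?case by (cases ys) auto
next
  case (Cons a xs) then show ?case by (cases xs) auto
qed

lemma walk_V: "walk V E q \<Longrightarrow> set q \<subseteq> V"
  by (induction V E q rule: walk.induct) auto

lemma walk_nonempty: "walk V E q \<Longrightarrow> q \<noteq> []"
  by (cases q) auto

context
  fixes n k :: nat
  assumes k: "2 \<le> k"
begin

abbreviation "VV \<equiv> pell_vertices n k"
abbreviation "EE \<equiv> pell_adj n k"

lemma adj_D: "EE u v \<Longrightarrow> D k u v = 1"
  using sstep_D[OF k] by (auto simp: adj_iff mem_V)

lemma walk_lb: "walk VV EE q \<Longrightarrow> D k (hd q) (last q) + 1 \<le> length q"
proof (induction VV EE q rule: walk.induct)
  case (3 x y xs)
  then have "EE x y" "walk VV EE (y # xs)" by auto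
  have "set (y # xs) \<subseteq> VV" using walk_V[OF \<open>walk VV EE (y # xs)\<close>] .
  then have "last (y # xs) \<in> VV" by auto
  moreover have "x \<in> VV" "y \<in> VV" using \<open>EE x y\<close> by (auto simp: adj_iff)
  ultimately have "D k x (last (y # xs)) \<le> D k x y + D k y (last (y # xs))"
    by (intro D_tri) (auto simp: mem_V)
  with adj_D[OF \<open>EE x y\<close>] 3 show ?case by auto
qed auto

lemma geo_exists: "u \<in> VV \<Longrightarrow> v \<in> VV \<Longrightarrow>
  \<exists>q. walk VV EE q \<and> hd q = u \<and> last q = v \<and> length q = D k u v + 1"
proof (induction "D k u v" arbitrary: u)
  case 0
  have "u = v"
  proof (rule ccontr)
    assume "u \<noteq> v"
    have "pl k u" "pl k v" "length u = length v" using 0 by (auto simp: mem_V)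
    from key[OF k this \<open>u \<noteq> v\<close>] 0(1) show False by auto
  qed
  with 0 show ?case by (intro exI[of _ "[u]"]) auto
next
  case (Suc d)
  then have "u \<noteq> v" by auto
  have "pl k u" "pl k v" "length u = length v" using Suc.prems by (auto simp: mem_V)
  from key[OF k this \<open>u \<noteq> v\<close>] obtain u' where u': "pl k u'" "length u' = length u" "sstep k u u'"
    "D k u' v + 1 = D k u v" by blast
  then have "u' \<in> VV" using Suc.prems by (auto simp: mem_V)
  have "d = D k u' v" using u'(4) Suc.hyps(2) by simp
  from Suc.hyps(1)[OF this \<open>u' \<in> VV\<close> Suc.prems(2)] obtain q where
    q: "walk VV EE q" "hd q = u'" "last q = v" "length q = D k u' v + 1" by blast
  have "EE u u'" using \<open>u' \<in> VV\<close> Suc.prems u' by (auto simp: adj_iff)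
  then have "walk VV EE (u # q)" using q Suc.prems by (cases q) auto
  then show ?case using q u' walk_nonempty[OF q(1)] by (intro exI[of _ "u # q"]) auto
qed

lemma geo_distinct: "walk VV EE q \<Longrightarrow> length q = D k (hd q) (last q) + 1 \<Longrightarrow> distinct q"
proof (rule ccontr)
  assume w: "walk VV EE q" and l: "length q = D k (hd q) (last q) + 1" and "\<not> distinct q"
  then obtain xs ys zs y where q: "q = xs @ [y] @ ys @ [y] @ zs" using not_distinct_decomp by blast
  have "walk VV EE (xs @ [y])" "walk VV EE (y # ys @ y # zs)"
    using w walk_append[of VV EE xs y "ys @ y # zs"] q by auto
  moreover have "walk VV EE (y # zs)"
    using calculation(2) walk_append[of VV EE "y # ys" y zs] by auto
  ultimately have w2: "walk VV EE (xs @ y # zs)" using walk_append[of VV EE xs y zs] by simp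
  have "hd (xs @ y # zs) = hd q" "last (xs @ y # zs) = last q" using q by (cases xs; auto)+
  with walk_lb[OF w2] l q show False by auto
qed

lemma sp_iff: "x \<in> VV \<Longrightarrow> y \<in> VV \<Longrightarrow>
  shortest_path VV EE x y p \<longleftrightarrow> walk VV EE p \<and> hd p = x \<and> last p = y \<and> length p = D k x y + 1"
proof
  assume xy: "x \<in> VV" "y \<in> VV"
  obtain q where q: "walk VV EE q" "hd q = x" "last q = y" "length q = D k x y + 1"
    using geo_exists[OF xy] by blast
  then have "distinct q" using geo_distinct by auto
  {
    assume "shortest_path VV EE x y p"
    then have "path_betw VV EE x y p" "length p \<le> length q"
      using q \<open>distinct q\<close> by (auto simp: shortest_path_def path_betw_def)
    moreover have "D k x y + 1 \<le> length p" using walk_lb calculation(1) by (auto simp: path_betw_def)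
    ultimately show "walk VV EE p \<and> hd p = x \<and> last p = y \<and> length p = D k x y + 1"
      using q by (auto simp: path_betw_def)
  }
  {
    assume p: "walk VV EE p \<and> hd p = x \<and> last p = y \<and> length p = D k x y + 1"
    then have "distinct p" using geo_distinct by auto
    moreover have "length p \<le> length r" if "path_betw VV EE x y r" for r
      using walk_lb[of r] that p by (auto simp: path_betw_def)
    ultimately show "shortest_path VV EE x y p" using p by (auto simp: shortest_path_def path_betw_def)
  }
qed

lemma osp_iff: "x \<in> VV \<Longrightarrow> y \<in> VV \<Longrightarrow>
  on_shortest_path VV EE x y w \<longleftrightarrow> w \<in> VV \<and> D k x w + D k w y = D k x y"
proof
  assume xy: "x \<in> VV" "y \<in> VV"
  {
    assume "on_shortest_path VV EE x y w"
    then obtain p where p: "walk VV EE p" "hd p = x" "last p = y" "length p = D k x y + 1" "w \<in> set p"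
      using sp_iff[OF xy] by (auto simp: on_shortest_path_def)
    then have wV: "w \<in> VV" using walk_V by blast
    from p obtain as bs where pab: "p = as @ w # bs" by (meson split_list)
    have w1: "walk VV EE (as @ [w])" and w2: "walk VV EE (w # bs)" using p(1) pab walk_append[of VV EE as w bs] by simp_all
    have "hd (as @ [w]) = x" using p pab by (cases as) auto
    with walk_lb[OF w1] have "D k x w + 1 \<le> length as + 1" by simp
    moreover have "last (w # bs) = y" using p pab by (cases bs) auto
    with walk_lb[OF w2] have "D k w y + 1 \<le> length bs + 1" by simp
    moreover have "D k x y \<le> D k x w + D k w y" using xy wV by (intro D_tri) (auto simp: mem_V)
    ultimately show "w \<in> VV \<and> D k x w + D k w y = D k x y" using p pab wV by simp
  }
  {
    assume w: "w \<in> VV \<and> D k x w + D k w y = D k x y"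
    obtain q1 where q1: "walk VV EE q1" "hd q1 = x" "last q1 = w" "length q1 = D k x w + 1"
      using geo_exists xy w by blast
    obtain q2 where q2: "walk VV EE q2" "hd q2 = w" "last q2 = y" "length q2 = D k w y + 1"
      using geo_exists xy w by blast
    obtain q1' where q1': "q1 = q1' @ [w]" using q1 walk_nonempty[OF q1(1)]
      by (metis append_butlast_last_id)
    obtain q2' where q2': "q2 = w # q2'" using q2 walk_nonempty[OF q2(1)]
      by (metis list.collapse)
    define p where "p = q1' @ w # q2'"
    have "walk VV EE p" using q1 q2 q1' q2' walk_append[of VV EE q1' w q2'] p_def by simp
    moreover have "hd p = x" using q1 q1' p_def by (cases q1') auto
    moreover have "last p = y" using q2 q2' p_def by (cases q2') auto
    moreover have "length p = D k x y + 1" using q1 q2 q1' q2' p_def w by simp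
    ultimately have "shortest_path VV EE x y p" using sp_iff[OF xy] by blast
    moreover have "w \<in> set p" using p_def by simp
    ultimately show "on_shortest_path VV EE x y w" by (auto simp: on_shortest_path_def)
  }
qed

end



definition med3 :: "nat \<Rightarrow> nat \<Rightarrow> nat \<Rightarrow> nat" where
  "med3 a b c = max (min a b) (min (max a b) c)"

lemma med3_pp[simp]: "med3 p p q = p" "med3 p q p = p" "med3 q p p = p"
  by (cases "p \<le> q"; simp add: med3_def min_def max_def)+

lemma dst_between: "dst a m + dst m b = dst a b \<longleftrightarrow> min a b \<le> m \<and> m \<le> max a b"
  by (cases "a \<le> b"; cases "a \<le> m"; cases "m \<le> b") (auto simp: dst_def min_def max_def)

lemma dst_tri: "dst a b \<le> dst a m + dst m b"
  by (cases "a \<le> b"; cases "a \<le> m"; cases "m \<le> b") (auto simp: dst_def)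

lemma med3_unique:
  "min a b \<le> m \<and> m \<le> max a b \<Longrightarrow> min a c \<le> m \<and> m \<le> max a c \<Longrightarrow> min b c \<le> m \<and> m \<le> max b c
   \<Longrightarrow> m = med3 a b c"
  by (cases "a \<le> b"; cases "b \<le> c"; cases "a \<le> c") (auto simp: med3_def min_def max_def)

lemma med3_between1: "min a b \<le> med3 a b c \<and> med3 a b c \<le> max a b"
  by (cases "a \<le> b"; cases "b \<le> c"; cases "a \<le> c") (simp_all add: med3_def min_def max_def)
lemma med3_between2: "min a c \<le> med3 a b c \<and> med3 a b c \<le> max a c"
  by (cases "a \<le> b"; cases "b \<le> c"; cases "a \<le> c") (simp_all add: med3_def min_def max_def)
lemma med3_between3: "min b c \<le> med3 a b c \<and> med3 a b c \<le> max b c"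
  by (cases "a \<le> b"; cases "b \<le> c"; cases "a \<le> c") (simp_all add: med3_def min_def max_def)
lemmas med3_between = med3_between1 med3_between2 med3_between3

lemma med3_le: "a \<le> K \<Longrightarrow> b \<le> K \<Longrightarrow> c \<le> K \<Longrightarrow> med3 a b c \<le> K"
  by (cases "a \<le> b"; cases "b \<le> c"; cases "a \<le> c") (auto simp: med3_def min_def max_def)

lemma med_one: "c1 \<le> 1 \<Longrightarrow> c2 \<le> 1 \<Longrightarrow> c3 \<le> (1::nat) \<Longrightarrow> med3 c1 c2 c3 = 1 \<Longrightarrow>
  (c1 = 1 \<and> c2 = 1) \<or> (c1 = 1 \<and> c3 = 1) \<or> (c2 = 1 \<and> c3 = 1)"
  by (cases "c1 \<le> c2"; cases "c2 \<le> c3"; cases "c1 \<le> c3") (auto simp: med3_def min_def max_def)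

fun med3l :: "nat list \<Rightarrow> nat list \<Rightarrow> nat list \<Rightarrow> nat list" where
  "med3l (a # as) (b # bs) (c # cs) = med3 a b c # med3l as bs cs"
| "med3l _ _ _ = []"

lemma length_med3l: "length a = length b \<Longrightarrow> length b = length c \<Longrightarrow> length (med3l a b c) = length a"
  by (induction a b c rule: med3l.induct) auto

lemma med3l_between_all:
  "length a = length b \<Longrightarrow> length b = length c \<Longrightarrow>
    l1 a (med3l a b c) + l1 (med3l a b c) b = l1 a b \<and>
    l1 a (med3l a b c) + l1 (med3l a b c) c = l1 a c \<and>
    l1 b (med3l a b c) + l1 (med3l a b c) c = l1 b c"
proof (induction a b c rule: med3l.induct)
  case (1 a as b bs c cs)
  have h: "dst a (med3 a b c) + dst (med3 a b c) b = dst a b"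
     "dst a (med3 a b c) + dst (med3 a b c) c = dst a c"
     "dst b (med3 a b c) + dst (med3 a b c) c = dst b c"
    unfolding dst_between using med3_between1[where a=a and b=b and c=c] med3_between2[where a=a and b=b and c=c] med3_between3[where a=a and b=b and c=c] by auto
  have t: "l1 as (med3l as bs cs) + l1 (med3l as bs cs) bs = l1 as bs"
    "l1 as (med3l as bs cs) + l1 (med3l as bs cs) cs = l1 as cs"
    "l1 bs (med3l as bs cs) + l1 (med3l as bs cs) cs = l1 bs cs"
    using 1 by auto
  show ?case using h t by simp
qed auto

lemma med3l_between:
  assumes "length a = length b" "length b = length c"
  shows "l1 a (med3l a b c) + l1 (med3l a b c) b = l1 a b"
    "l1 a (med3l a b c) + l1 (med3l a b c) c = l1 a c"
    "l1 b (med3l a b c) + l1 (med3l a b c) c = l1 b c"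
  using med3l_between_all[OF assms] by auto

lemma med3l_unique:
  "length a = length m \<Longrightarrow> length b = length m \<Longrightarrow> length c = length m \<Longrightarrow>
   l1 a m + l1 m b = l1 a b \<Longrightarrow> l1 a m + l1 m c = l1 a c \<Longrightarrow> l1 b m + l1 m c = l1 b c \<Longrightarrow>
   m = med3l a b c"
proof (induction m arbitrary: a b c)
  case Nil then show ?case by simp
next
  case (Cons x ms)
  then obtain a0 as b0 bs c0 cs where abc: "a = a0 # as" "b = b0 # bs" "c = c0 # cs"
    by (cases a; cases b; cases c) auto
  have l: "length as = length ms" "length bs = length ms" "length cs = length ms" using Cons abc by auto
  have t1: "l1 as bs \<le> l1 as ms + l1 ms bs" "l1 as cs \<le> l1 as ms + l1 ms cs" "l1 bs cs \<le> l1 bs ms + l1 ms cs"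
    using l l1_tri by metis+
  have d1: "dst a0 b0 \<le> dst a0 x + dst x b0" "dst a0 c0 \<le> dst a0 x + dst x c0" "dst b0 c0 \<le> dst b0 x + dst x c0"
    using dst_tri by blast+
  have e: "dst a0 x + dst x b0 = dst a0 b0" "dst a0 x + dst x c0 = dst a0 c0" "dst b0 x + dst x c0 = dst b0 c0"
    "l1 as ms + l1 ms bs = l1 as bs" "l1 as ms + l1 ms cs = l1 as cs" "l1 bs ms + l1 ms cs = l1 bs cs"
  proof -
    have p: "dst a0 x + l1 as ms + (dst x b0 + l1 ms bs) = dst a0 b0 + l1 as bs"
      "dst a0 x + l1 as ms + (dst x c0 + l1 ms cs) = dst a0 c0 + l1 as cs"
      "dst b0 x + l1 bs ms + (dst x c0 + l1 ms cs) = dst b0 c0 + l1 bs cs"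
      using Cons.prems abc by simp_all
    show "dst a0 x + dst x b0 = dst a0 b0" "dst a0 x + dst x c0 = dst a0 c0" "dst b0 x + dst x c0 = dst b0 c0"
    "l1 as ms + l1 ms bs = l1 as bs" "l1 as ms + l1 ms cs = l1 as cs" "l1 bs ms + l1 ms cs = l1 bs cs"
      using p t1 d1 by linarith+
  qed
  have "x = med3 a0 b0 c0" using e(1-3) dst_between med3_unique by metis
  moreover have "ms = med3l as bs cs" using Cons.IH[OF l e(4-6)] .
  ultimately show ?case using abc by simp
qed

fun ok :: "nat \<Rightarrow> nat list \<Rightarrow> nat list \<Rightarrow> bool" where
  "ok k [] [] = True"
| "ok k (a # as) (b # bs) = (a \<le> k - 1 \<and> b \<le> 1 \<and>
     (b = 1 \<longrightarrow> as \<noteq> [] \<and> hd as = k - 1 \<and> hd bs = 0 \<and> a = k - 1) \<and> ok k as bs)"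
| "ok k _ _ = False"

lemma ok_length: "ok k a b \<Longrightarrow> length a = length b"
  by (induction k a b rule: ok.induct) auto

lemma ok_pl: "pl k u \<Longrightarrow> ok k (amap k u) (blk k u)"
  by (induction rule: pl.induct) auto

lemma ok_ex: "1 \<le> k \<Longrightarrow> ok k a b \<Longrightarrow> \<exists>u. pl k u \<and> amap k u = a \<and> blk k u = b"
proof (induction a arbitrary: b rule: induct_list012)
  case 1 then show ?case by (cases b) (auto intro: pl.intros)
next
  case (2 x)
  then obtain b0 where "b = [b0]" by (cases b) (auto dest: ok_length)
  with 2 show ?case by (intro exI[of _ "[x]"]) (auto intro: pl.intros)
next
  case (3 x y zs)
  then obtain b0 b1 bs where b: "b = b0 # b1 # bs"
    using ok_length by (metis Suc_length_conv)
  show ?case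
  proof (cases "b0 = 1")
    case False
    with 3 b have "ok k (y # zs) (b1 # bs)" "x < k" "b0 = 0" by auto
    then obtain u where "pl k u" "amap k u = y # zs" "blk k u = b1 # bs" using 3 by blast
    then show ?thesis using b \<open>x < k\<close> \<open>b0 = 0\<close>
      by (intro exI[of _ "x # u"]) (auto intro: pl.intros)
  next
    case True
    with 3 b have "ok k zs bs" "x = k - 1" "y = k - 1" "b1 = 0" by auto
    then obtain u where "pl k u" "amap k u = zs" "blk k u = bs" using 3 by blast
    then show ?thesis using b True \<open>x = k - 1\<close> \<open>y = k - 1\<close> \<open>b1 = 0\<close>
      by (intro exI[of _ "k # k # u"]) (auto intro: pl.intros)
  qed
qed

lemma ok_med:
  "ok k a1 b1 \<Longrightarrow> ok k a2 b2 \<Longrightarrow> ok k a3 b3 \<Longrightarrow> length a1 = length a2 \<Longrightarrow> length a2 = length a3 \<Longrightarrow>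
   ok k (med3l a1 a2 a3) (med3l b1 b2 b3)"
proof (induction a1 arbitrary: a2 a3 b1 b2 b3)
  case Nil then show ?case by (cases b1; cases b2; cases b3; cases a2; cases a3) auto
next
  case (Cons x1 as1)
  from Cons.prems obtain x2 as2 x3 as3 where a: "a2 = x2 # as2" "a3 = x3 # as3"
    by (cases a2; cases a3) auto
  from Cons.prems a obtain c1 bs1 c2 bs2 c3 bs3 where b: "b1 = c1 # bs1" "b2 = c2 # bs2" "b3 = c3 # bs3"
    by (cases b1; cases b2; cases b3) auto
  have o: "ok k as1 bs1" "ok k as2 bs2" "ok k as3 bs3" using Cons.prems a b by auto
  have IH: "ok k (med3l as1 as2 as3) (med3l bs1 bs2 bs3)" using Cons.IH[OF o] Cons.prems a by auto
  have h: "x1 \<le> k - 1" "x2 \<le> k - 1" "x3 \<le> k - 1" "c1 \<le> 1" "c2 \<le> 1" "c3 \<le> 1"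
    using Cons.prems a b by auto
  have c: "med3 c1 c2 c3 = 1 \<longrightarrow> med3l as1 as2 as3 \<noteq> [] \<and> hd (med3l as1 as2 as3) = k - 1
      \<and> hd (med3l bs1 bs2 bs3) = 0 \<and> med3 x1 x2 x3 = k - 1"
  proof
    assume m1: "med3 c1 c2 c3 = 1"
    have L: "length as1 = length as2" "length as2 = length as3" using Cons.prems a by auto
    have LB: "length as1 = length bs1" "length as2 = length bs2" "length as3 = length bs3"
      using o ok_length by auto
    have "as1 \<noteq> [] \<or> as2 \<noteq> [] \<or> as3 \<noteq> []"
      using med_one[OF h(4-6) m1] Cons.prems a b by auto
    then have "as1 \<noteq> []" using L by auto
    then obtain h1 t1 h2 t2 h3 t3 where as: "as1 = h1 # t1" "as2 = h2 # t2" "as3 = h3 # t3"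
      using L by (cases as1; cases as2; cases as3) auto
    then obtain g1 s1 g2 s2 g3 s3 where bs: "bs1 = g1 # s1" "bs2 = g2 # s2" "bs3 = g3 # s3"
      using LB by (cases bs1; cases bs2; cases bs3) auto
    have P: "c1 = 1 \<longrightarrow> h1 = k - 1 \<and> g1 = 0 \<and> x1 = k - 1"
       "c2 = 1 \<longrightarrow> h2 = k - 1 \<and> g2 = 0 \<and> x2 = k - 1"
       "c3 = 1 \<longrightarrow> h3 = k - 1 \<and> g3 = 0 \<and> x3 = k - 1"
      using Cons.prems a b as bs by auto
    show "med3l as1 as2 as3 \<noteq> [] \<and> hd (med3l as1 as2 as3) = k - 1
      \<and> hd (med3l bs1 bs2 bs3) = 0 \<and> med3 x1 x2 x3 = k - 1"
      using med_one[OF h(4-6) m1] P as bs by auto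
  qed
  show ?case using a b IH h c med3_le[of x1 "k-1" x2 x3] med3_le[of c1 1 c2 c3] by simp
qed



context
  fixes n k :: nat
  assumes k: "2 \<le> k"
begin

lemma D0: "u \<in> VV n k \<Longrightarrow> v \<in> VV n k \<Longrightarrow> D k u v = 0 \<Longrightarrow> u = v"
proof (rule ccontr)
  assume "u \<in> VV n k" "v \<in> VV n k" "D k u v = 0" "u \<noteq> v"
  moreover have "pl k u" "pl k v" "length u = length v" using calculation by (auto simp: mem_V)
  ultimately show False using key[OF k, of u v] by auto
qed

lemma comp_split:
  assumes "length a = length b" "length b = length c" "length a' = length b'" "length b' = length c'"
    "l1 a b + l1 a' b' + (l1 b c + l1 b' c') = l1 a c + l1 a' c'"
  shows "l1 a b + l1 b c = l1 a c" "l1 a' b' + l1 b' c' = l1 a' c'"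
  using assms l1_tri[of a b c] l1_tri[of a' b' c'] by linarith+

lemma median_iff: "x \<in> VV n k \<Longrightarrow> y \<in> VV n k \<Longrightarrow> z \<in> VV n k \<Longrightarrow>
  is_median (VV n k) (EE n k) x y z m \<longleftrightarrow> m \<in> VV n k \<and> D k x m + D k m y = D k x y \<and>
     D k x m + D k m z = D k x z \<and> D k y m + D k m z = D k y z"
  unfolding is_median_def using osp_iff[OF k] by blast

lemma median_unique_vec:
  assumes xyz: "x \<in> VV n k" "y \<in> VV n k" "z \<in> VV n k"
    and m: "is_median (VV n k) (EE n k) x y z m"
  shows "amap k m = med3l (amap k x) (amap k y) (amap k z) \<and> blk k m = med3l (blk k x) (blk k y) (blk k z)"
proof -
  have mm: "m \<in> VV n k" "D k x m + D k m y = D k x y" "D k x m + D k m z = D k x z" "D k y m + D k m z = D k y z"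
    using m median_iff[OF xyz] by auto
  have L: "length x = n" "length y = n" "length z = n" "length m = n" using xyz mm by (auto simp: mem_V)
  have e1: "l1 (amap k x) (amap k m) + l1 (amap k m) (amap k y) = l1 (amap k x) (amap k y)"
    "l1 (blk k x) (blk k m) + l1 (blk k m) (blk k y) = l1 (blk k x) (blk k y)"
    using comp_split[of "amap k x" "amap k m" "amap k y" "blk k x" "blk k m" "blk k y"] mm(2) L
    by (simp_all add: D_def)
  have e2: "l1 (amap k x) (amap k m) + l1 (amap k m) (amap k z) = l1 (amap k x) (amap k z)"
    "l1 (blk k x) (blk k m) + l1 (blk k m) (blk k z) = l1 (blk k x) (blk k z)"
    using comp_split[of "amap k x" "amap k m" "amap k z" "blk k x" "blk k m" "blk k z"] mm(3) L
    by (simp_all add: D_def)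
  have e3: "l1 (amap k y) (amap k m) + l1 (amap k m) (amap k z) = l1 (amap k y) (amap k z)"
    "l1 (blk k y) (blk k m) + l1 (blk k m) (blk k z) = l1 (blk k y) (blk k z)"
    using comp_split[of "amap k y" "amap k m" "amap k z" "blk k y" "blk k m" "blk k z"] mm(4) L
    by (simp_all add: D_def)
  show ?thesis
    using med3l_unique[of "amap k x" "amap k m" "amap k y" "amap k z"]
      med3l_unique[of "blk k x" "blk k m" "blk k y" "blk k z"] e1 e2 e3 L by simp
qed

lemma median_exists:
  assumes xyz: "x \<in> VV n k" "y \<in> VV n k" "z \<in> VV n k"
  shows "\<exists>m. is_median (VV n k) (EE n k) x y z m"
proof -
  have L: "length x = n" "length y = n" "length z = n" "pl k x" "pl k y" "pl k z" using xyz by (auto simp: mem_V)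
  define A where "A = med3l (amap k x) (amap k y) (amap k z)"
  define B where "B = med3l (blk k x) (blk k y) (blk k z)"
  have "ok k A B" unfolding A_def B_def
    using ok_med[OF ok_pl[OF L(4)] ok_pl[OF L(5)] ok_pl[OF L(6)]] L by simp
  then obtain m where m: "pl k m" "amap k m = A" "blk k m = B" using ok_ex[of k] k by auto
  have "length m = n" using arg_cong[OF m(2), of length] L length_med3l[of "amap k x" "amap k y" "amap k z"]
    by (simp add: A_def)
  then have mV: "m \<in> VV n k" using m by (simp add: mem_V)
  have a: "l1 (amap k x) A + l1 A (amap k y) = l1 (amap k x) (amap k y)"
    "l1 (amap k x) A + l1 A (amap k z) = l1 (amap k x) (amap k z)"
    "l1 (amap k y) A + l1 A (amap k z) = l1 (amap k y) (amap k z)"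
    unfolding A_def using med3l_between[of "amap k x" "amap k y" "amap k z"] L by simp_all
  have b: "l1 (blk k x) B + l1 B (blk k y) = l1 (blk k x) (blk k y)"
    "l1 (blk k x) B + l1 B (blk k z) = l1 (blk k x) (blk k z)"
    "l1 (blk k y) B + l1 B (blk k z) = l1 (blk k y) (blk k z)"
    unfolding B_def using med3l_between[of "blk k x" "blk k y" "blk k z"] L by simp_all
  have "is_median (VV n k) (EE n k) x y z m"
    unfolding median_iff[OF xyz] using mV a b m by (simp add: D_def)
  then show ?thesis by blast
qed

lemma pl_zeros: "pl k (replicate n 0)"
  using k by (induction n) (auto intro: pl.intros)

lemma main: "median_graph (VV n k) (EE n k)"
proof -
  have "replicate n 0 \<in> VV n k" using pl_zeros by (simp add: mem_V)
  moreover have "\<exists>p. path_betw (VV n k) (EE n k) x y p" if xy: "x \<in> VV n k" "y \<in> VV n k" for x y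
  proof -
    obtain q where q: "walk (VV n k) (EE n k) q" "hd q = x" "last q = y" "length q = D k x y + 1"
      using geo_exists[OF k xy] by blast
    then have "distinct q" using geo_distinct[OF k] by auto
    then show ?thesis using q by (auto simp: path_betw_def)
  qed
  ultimately have "connected_graph (VV n k) (EE n k)" unfolding connected_graph_def by blast
  moreover have "\<exists>!m. is_median (VV n k) (EE n k) x y z m"
    if xyz: "x \<in> VV n k" "y \<in> VV n k" "z \<in> VV n k" for x y z
  proof -
    obtain m where "is_median (VV n k) (EE n k) x y z m" using median_exists[OF xyz] by blast
    moreover have "m1 = m2" if mm: "is_median (VV n k) (EE n k) x y z m1" "is_median (VV n k) (EE n k) x y z m2" for m1 m2
    proof -
      have "m1 \<in> VV n k" "m2 \<in> VV n k" using mm by (auto simp: is_median_def)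
      moreover have "D k m1 m2 = 0"
        using median_unique_vec[OF xyz] mm
        by (simp add: D_def)
      ultimately show ?thesis using D0 by blast
    qed
    ultimately show ?thesis by blast
  qed
  ultimately show ?thesis unfolding median_graph_def by blast
qed

end

theorem proposition5p7:
  fixes n k :: nat
  assumes "n \<ge> 1" and "k \<ge> 2"
  shows "median_graph (pell_vertices n k) (pell_adj n k)"
  using main[OF assms(2)] .

end
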